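(* Let $S$ be an $(l,r)$-framed algebra, $\lambda^1,\lambda^2,\lambda^3\in\mathrm{IS}^{(l,r)}$ and $a_i\in S_{\lambda^i}$. Then: (1) for $\lambda^0\in\lambda^1\star\lambda^2$, $a_1\cdot_{\lambda^0}a_2=(-1)^{s(\lambda^0)+s(\lambda^1)+s(\lambda^2)}a_2\cdot_{\lambda^0}a_1$; (2) for $\lambda^0\in\mathrm{IS}^{(l,r)}$ and $\mu'\in A(\lambda^0,\lambda^1,\lambda^2,\lambda^3)$, $a_1\cdot_{\lambda^0}(a_2\cdot_{\mu'}a_3)=\sum_{\mu\in A(\lambda^0,\lambda^3,\lambda^1,\lambda^2)}(-1)^{s(\mu')+s(\mu)+s(\lambda^2)+s(\lambda^0)}B^{\mu,\mu'}_{\lambda^0,\lambda^3,\lambda^1,\lambda^2}(a_1\cdot_\mu a_2)\cdot_{\lambda^0}a_3$.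
   Context: Let $\mathrm{IS}=\{0,\frac12,\frac1{16}\}$ with fusion rule $\star$ (values are subsets of $\mathrm{IS}$): $0\star h=h\star 0=\{h\}$, $\frac12\star\frac12=\{0\}$, $\frac12\star\frac1{16}=\frac1{16}\star\frac12=\{\frac1{16}\}$, $\frac1{16}\star\frac1{16}=\{0,\frac12\}$. For $h_0,\dots,h_3\in\mathrm{IS}$ put $A(h_0,h_1,h_2,h_3)=\{h: h\in h_2\star h_3,\ h_0\in h_1\star h\}$. For $h\in A(h_0,h_1,h_2,h_3)$, $h'\in A(h_0,h_2,h_1,h_3)$ define $B^{h,h'}_{h_0,h_1,h_2,h_3}\in\mathbb{C}$ by: $B_{*,0,*,*}=B_{*,*,0,*}=1$; $B_{*,\frac12,\frac12,*}=-1$; $B_{a,\frac12,\frac1{16},a'}=B_{a,\frac1{16},\frac12,a'}=i$ if $a$ or $a'$ equals $\frac12$, $-i$ otherwise; $B^{b,b'}_{a,\frac1{16},\frac1{16},a'}=e^{-\pi i/8}$ times: $1$ if $a,a'\ne\frac1{16}$, $a=a'$; $i$ if $a,a'\ne\frac1{16}$, $a\neq a'$; $\frac{1+i}2$ if $a=a'=\frac1{16}$, $b=b'$; $\frac{1-i}2$ if $a=a'=\frac1{16}$, $b\ne b'$. For $l,r\ge0$ let $\mathrm{IS}^{(l,r)}=\mathrm{IS}^l\times\mathrm{IS}^r$, $\lambda=(h_1,\dots,h_l,\bar h_1,\dots,\bar h_r)$, $s(\lambda)=\sum h_i-\sum \bar h_j$; $\star$ and $A$ are extended componentwise, and $B^{\lambda,\lambda'}_{\lambda^0,\lambda^1,\lambda^2,\lambda^3}=\prod_{i\le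 l}B^{h_i,h_i'}_{h^0_i,h^1_i,h^2_i,h^3_i}\prod_{j\le r}\overline{B^{\bar h_j,\bar h_j'}_{\bar h^0_j,\bar h^1_j,\bar h^2_j,\bar h^3_j}}$. An $(l,r)$-framed algebra is a finite-dimensional $\mathrm{IS}^{(l,r)}$-graded complex vector space $S=\bigoplus S_\lambda$ with bilinear product $\cdot$ and nonzero $1\in S_0$, writing $a\cdot_\lambda b$ for the $S_\lambda$-component of $a\cdot b$, such that (FA1) $S_\lambda=0$ unless $s(\lambda)\in\mathbb{Z}$; (FA2) $S_0=\mathbb{C}1$, $1$ is a two-sided unit; (FA3) $S_{\lambda^1}\cdot S_{\lambda^2}\subset\bigoplus_{\lambda\in\lambda^1\star\lambda^2}S_\lambda$; (FA4) for $a_i\in S_{\lambda^i}$ and $\lambda'\in A(\lambda^0,\lambda^2,\lambda^1,\lambda^3)$: $a_2\cdot_{\lambda^0}(a_1\cdot_{\lambda'}a_3)=\sum_{\lambda\in A(\lambda^0,\lambda^1,\lambda^2,\lambda^3)}B^{\lambda,\lambda'}_{\lambda^0,\lambda^1,\lambda^2,\lambda^3}a_1\cdot_{\lambda^0}(a_2\cdot_\lambda a_3)$. *)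

theory Defs
  imports Complex_Main
begin

datatype ising = I0 | Ih | Is

fun hval :: "ising \<Rightarrow> real" where
  "hval I0 = 0"
| "hval Ih = 1/2"
| "hval Is = 1/16"

fun fus :: "ising \<Rightarrow> ising \<Rightarrow> ising set" where
  "fus I0 h = {h}"
| "fus h I0 = {h}"
| "fus Ih Ih = {I0}"
| "fus Ih Is = {Is}"
| "fus Is Ih = {Is}"
| "fus Is Is = {I0, Ih}"

definition Aset1 :: "ising \<Rightarrow> ising \<Rightarrow> ising \<Rightarrow> ising \<Rightarrow> ising set" where
  "Aset1 h0 h1 h2 h3 = {h. h \<in> fus h2 h3 \<and> h0 \<in> fus h1 h}"

text \<open>Bc h0 h1 h2 h3 h h' is the braiding coefficient B^{h,h'}_{h0,h1,h2,h3}.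
  In the case h1 = h2 = 1/16 with exactly one of h0, h3 equal to 1/16 the
  relevant index sets are empty, so the value 0 chosen there is irrelevant.\<close>
definition Bc :: "ising \<Rightarrow> ising \<Rightarrow> ising \<Rightarrow> ising \<Rightarrow> ising \<Rightarrow> ising \<Rightarrow> complex" where
  "Bc a h1 h2 a' b b' =
    (if h1 = I0 \<or> h2 = I0 then 1
     else if h1 = Ih \<and> h2 = Ih then -1
     else if (h1 = Ih \<and> h2 = Is) \<or> (h1 = Is \<and> h2 = Ih) then
       (if a = Ih \<or> a' = Ih then \<i> else - \<i>)
     else \<comment> \<open>h1 = h2 = 1/16\<close>
       exp (- pi * \<i> / 8) *
       (if a \<noteq> Is \<and> a' \<noteq> Is then (if a = a' then 1 else \<i>)
        else if a = Is \<and> a' = Is then (if b = b' then (1 + \<i>) / 2 else (1 - \<i>) / 2)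
        else 0))"

text \<open>An element of IS^(l,r) is a pair of lists (h_1..h_l, hbar_1..hbar_r).\<close>
type_synonym idx = "ising list \<times> ising list"

definition ISlr :: "nat \<Rightarrow> nat \<Rightarrow> idx set" where
  "ISlr l r = {(xs, ys). length xs = l \<and> length ys = r}"

definition zero_idx :: "nat \<Rightarrow> nat \<Rightarrow> idx" where
  "zero_idx l r = (replicate l I0, replicate r I0)"

definition sidx :: "idx \<Rightarrow> real" where
  "sidx L = sum_list (map hval (fst L)) - sum_list (map hval (snd L))"

definition fusL :: "idx \<Rightarrow> idx \<Rightarrow> idx set" where
  "fusL L1 L2 =
     listset (map2 fus (fst L1) (fst L2)) \<times> listset (map2 fus (snd L1) (snd L2))"

definition AL :: "idx \<Rightarrow> idx \<Rightarrow> idx \<Rightarrow> idx \<Rightarrow> idx set" where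
  "AL L0 L1 L2 L3 = {L. L \<in> fusL L2 L3 \<and> L0 \<in> fusL L1 L}"

text \<open>BL mu mu' l0 l1 l2 l3 = B^{mu,mu'}_{l0,l1,l2,l3} (holomorphic part times
  complex conjugate of antiholomorphic part).\<close>
definition BL :: "idx \<Rightarrow> idx \<Rightarrow> idx \<Rightarrow> idx \<Rightarrow> idx \<Rightarrow> idx \<Rightarrow> complex" where
  "BL \<mu> \<mu>' L0 L1 L2 L3 =
     (\<Prod>i<length (fst L0).
        Bc (fst L0 ! i) (fst L1 ! i) (fst L2 ! i) (fst L3 ! i) (fst \<mu> ! i) (fst \<mu>' ! i)) *
     (\<Prod>j<length (snd L0).
        cnj (Bc (snd L0 ! j) (snd L1 ! j) (snd L2 ! j) (snd L3 ! j) (snd \<mu> ! j) (snd \<mu>' ! j)))"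

text \<open>(-1)^q for a real exponent q, read as exp(pi i q); for integer q this is
  the usual sign.\<close>
definition mpow :: "real \<Rightarrow> complex" where
  "mpow q = exp (\<i> * complex_of_real (pi * q))"

definition graded_direct_sum ::
  "(complex \<Rightarrow> 'v::ab_group_add \<Rightarrow> 'v) \<Rightarrow> 'i set \<Rightarrow> ('i \<Rightarrow> 'v set) \<Rightarrow> bool" where
  "graded_direct_sum sc Idx Sg \<longleftrightarrow>
     finite Idx \<and>
     (\<forall>L\<in>Idx. module.subspace sc (Sg L)) \<and>
     (\<forall>v. \<exists>!f. (\<forall>\<mu>\<in>Idx. f \<mu> \<in> Sg \<mu>) \<and> (\<forall>\<mu>. \<mu> \<notin> Idx \<longrightarrow> f \<mu> = 0) \<and>
               v = (\<Sum>\<mu>\<in>Idx. f \<mu>))"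

definition gcomp :: "'i set \<Rightarrow> ('i \<Rightarrow> 'v::ab_group_add set) \<Rightarrow> 'i \<Rightarrow> 'v \<Rightarrow> 'v" where
  "gcomp Idx Sg L v =
     (THE f. (\<forall>\<mu>\<in>Idx. f \<mu> \<in> Sg \<mu>) \<and> (\<forall>\<mu>. \<mu> \<notin> Idx \<longrightarrow> f \<mu> = 0) \<and>
             v = (\<Sum>\<mu>\<in>Idx. f \<mu>)) L"

definition dotL :: "nat \<Rightarrow> nat \<Rightarrow> (idx \<Rightarrow> 'v::ab_group_add set) \<Rightarrow> ('v \<Rightarrow> 'v \<Rightarrow> 'v)
                    \<Rightarrow> idx \<Rightarrow> 'v \<Rightarrow> 'v \<Rightarrow> 'v" where
  "dotL l r Sg mult L a b = gcomp (ISlr l r) Sg L (mult a b)"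

definition framed_algebra ::
  "nat \<Rightarrow> nat \<Rightarrow> (complex \<Rightarrow> 'v::ab_group_add \<Rightarrow> 'v) \<Rightarrow> (idx \<Rightarrow> 'v set)
   \<Rightarrow> ('v \<Rightarrow> 'v \<Rightarrow> 'v) \<Rightarrow> 'v \<Rightarrow> bool" where
  "framed_algebra l r sc Sg mult one \<longleftrightarrow>
     \<comment> \<open>finite-dimensional complex vector space\<close>
     vector_space sc \<and>
     (\<exists>B. finite B \<and> module.span sc B = UNIV) \<and>
     \<comment> \<open>IS^(l,r)-graded\<close>
     graded_direct_sum sc (ISlr l r) Sg \<and>
     \<comment> \<open>bilinear product\<close>
     (\<forall>a. Vector_Spaces.linear sc sc (mult a)) \<and>
     (\<forall>b. Vector_Spaces.linear sc sc (\<lambda>a. mult a b)) \<and>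
     \<comment> \<open>nonzero unit in S_0\<close>
     one \<noteq> 0 \<and> one \<in> Sg (zero_idx l r) \<and>
     \<comment> \<open>FA1\<close>
     (\<forall>L\<in>ISlr l r. sidx L \<notin> \<int> \<longrightarrow> Sg L = {0}) \<and>
     \<comment> \<open>FA2\<close>
     Sg (zero_idx l r) = range (\<lambda>c. sc c one) \<and>
     (\<forall>a. mult one a = a \<and> mult a one = a) \<and>
     \<comment> \<open>FA3\<close>
     (\<forall>L1\<in>ISlr l r. \<forall>L2\<in>ISlr l r. \<forall>a\<in>Sg L1. \<forall>b\<in>Sg L2.
        mult a b \<in> module.span sc (\<Union>L\<in>fusL L1 L2. Sg L)) \<and>
     \<comment> \<open>FA4\<close>
     (\<forall>L0\<in>ISlr l r. \<forall>L1\<in>ISlr l r. \<forall>L2\<in>ISlr l r. \<forall>L3\<in>ISlr l r.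
      \<forall>a1\<in>Sg L1. \<forall>a2\<in>Sg L2. \<forall>a3\<in>Sg L3. \<forall>L'\<in>AL L0 L2 L1 L3.
        dotL l r Sg mult L0 a2 (dotL l r Sg mult L' a1 a3) =
        (\<Sum>L\<in>AL L0 L1 L2 L3.
           sc (BL L L' L0 L1 L2 L3) (dotL l r Sg mult L0 a1 (dotL l r Sg mult L a2 a3))))"

end

theory Submission
  imports Defs
begin


lemma in_listset: "xs \<in> listset As \<longleftrightarrow> length xs = length As \<and> (\<forall>i<length As. xs!i \<in> As!i)"
proof (induction As arbitrary: xs)
  case Nil then show ?case by auto
next
  case (Cons A As)
  show ?case
  proof (cases xs)
    case Nil then show ?thesis by (auto simp: set_Cons_def)
  next
    case (Cons y ys)
    have "xs \<in> listset (A # As) \<longleftrightarrow> y \<in> A \<and> ys \<in> listset As"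
      using Cons by (auto simp: set_Cons_def)
    also have "\<dots> \<longleftrightarrow> length xs = length (A#As) \<and> (\<forall>i<length (A#As). xs!i \<in> (A#As)!i)"
      using Cons.IH[of ys] Cons by (auto simp: nth_Cons split: nat.splits)
    finally show ?thesis .
  qed
qed

lemma fus_comm: "fus a b = fus b a"
  by (cases a; cases b; simp)

lemma fus_I0: "fus h I0 = {h}"
  by (cases h; simp)

lemma map2_comm: "map2 fus xs ys = map2 fus ys xs"
  by (rule nth_equalityI) (auto simp: fus_comm)

lemma fusL_comm: "fusL L1 L2 = fusL L2 L1"
  unfolding fusL_def by (simp add: map2_comm)

lemma fusL_iff: "L \<in> fusL L1 L2 \<longleftrightarrow>
   length (fst L) = min (length (fst L1)) (length (fst L2)) \<and>
   (\<forall>i<length (fst L). fst L ! i \<in> fus (fst L1 ! i) (fst L2 ! i)) \<and>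
   length (snd L) = min (length (snd L1)) (length (snd L2)) \<and>
   (\<forall>i<length (snd L). snd L ! i \<in> fus (snd L1 ! i) (snd L2 ! i))"
  by (cases L) (auto simp: fusL_def in_listset)

lemma fusL_ISlr: "L1 \<in> ISlr l r \<Longrightarrow> L2 \<in> ISlr l r \<Longrightarrow> L \<in> fusL L1 L2 \<Longrightarrow> L \<in> ISlr l r"
  by (cases L) (auto simp: fusL_iff ISlr_def)

lemma zero_ISlr: "zero_idx l r \<in> ISlr l r"
  by (simp add: zero_idx_def ISlr_def)

lemma fusL_zero: "L1 \<in> ISlr l r \<Longrightarrow> fusL L1 (zero_idx l r) = {L1}"
  apply (cases L1)
  apply (auto simp: fusL_iff ISlr_def zero_idx_def fus_I0 intro!: nth_equalityI)
  done

lemma AL_zero: "L2 \<in> ISlr l r \<Longrightarrow> L0 \<in> fusL L1 L2 \<Longrightarrow> AL L0 L1 L2 (zero_idx l r) = {L2}"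
  by (auto simp: AL_def fusL_zero)

lemma AL_zero': "L1 \<in> ISlr l r \<Longrightarrow> L0 \<in> fusL L1 L2 \<Longrightarrow> L1 \<in> AL L0 L2 L1 (zero_idx l r)"
  by (auto simp: AL_def fusL_zero fusL_comm)

lemma mpow_cis: "mpow x = cis (pi * x)"
  by (simp add: mpow_def cis_conv_exp)

lemma f1: "cis (- pi) = -1" by (simp add: complex_eq_iff)
lemma f2: "exp (- (\<i> * complex_of_real pi / 8)) = cis (- (pi / 8))"
  by (simp add: cis_conv_exp)
lemma f3: "\<i> * cis (- (pi / 8)) = cis (pi * 3 / 8)"
proof -
  have "cis (pi/2) * cis (- (pi / 8)) = cis (pi/2 + - (pi / 8))" by (simp only: cis_mult)
  also have "pi/2 + - (pi / 8) = pi * 3 / 8" by simp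
  finally show ?thesis by simp
qed

lemma Bc_I0: "h0 \<in> fus h1 h2 \<Longrightarrow> Bc h0 h1 h2 I0 b b' = cis (pi * (hval h0 - hval h1 - hval h2))"
  by (cases h1; cases h2; cases h0; auto simp: Bc_def f1 f2 f3 algebra_simps)


lemma prod_cis: "(\<Prod>i<(n::nat). cis (f i)) = cis (\<Sum>i<n. f i)"
  by (induction n) (simp_all add: cis_mult)

lemma sum_list_hval: "sum_list (map hval xs) = (\<Sum>i<length xs. hval (xs!i))"
  by (simp add: sum_list_sum_nth atLeast0LessThan)

lemma prod_part:
  assumes "length xs = n" "length ys = n" "length zs = n"
    and "\<forall>i<n. xs!i \<in> fus (ys!i) (zs!i)"
  shows "(\<Prod>i<n. Bc (xs!i) (ys!i) (zs!i) (replicate n I0 ! i) (u i) (v i)) =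
         cis (pi * (sum_list (map hval xs) - sum_list (map hval ys) - sum_list (map hval zs)))"
proof -
  have "(\<Prod>i<n. Bc (xs!i) (ys!i) (zs!i) (replicate n I0 ! i) (u i) (v i)) =
        (\<Prod>i<n. cis (pi * (hval (xs!i) - hval (ys!i) - hval (zs!i))))"
    using assms(4) by (intro prod.cong) (auto simp: Bc_I0)
  also have "\<dots> = cis (\<Sum>i<n. pi * (hval (xs!i) - hval (ys!i) - hval (zs!i)))"
    by (rule prod_cis)
  also have "(\<Sum>i<n. pi * (hval (xs!i) - hval (ys!i) - hval (zs!i))) =
     pi * (sum_list (map hval xs) - sum_list (map hval ys) - sum_list (map hval zs))"
    using assms(1-3) by (simp add: sum_list_hval sum_distrib_left sum_subtractf right_diff_distrib)
  finally show ?thesis .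
qed

lemma BL_zero:
  assumes "L1 \<in> ISlr l r" "L2 \<in> ISlr l r" "L0 \<in> fusL L1 L2"
  shows "BL L2 L1 L0 L1 L2 (zero_idx l r) = mpow (sidx L0 - sidx L1 - sidx L2)"
proof -
  have L0: "L0 \<in> ISlr l r" using assms fusL_ISlr by blast
  obtain x0 y0 where e0: "L0 = (x0, y0)" by force
  obtain x1 y1 where e1: "L1 = (x1, y1)" by force
  obtain x2 y2 where e2: "L2 = (x2, y2)" by force
  have len: "length x0 = l" "length x1 = l" "length x2 = l" "length y0 = r" "length y1 = r" "length y2 = r"
    using assms L0 e0 e1 e2 by (auto simp: ISlr_def)
  have m: "\<forall>i<l. x0!i \<in> fus (x1!i) (x2!i)" "\<forall>i<r. y0!i \<in> fus (y1!i) (y2!i)"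
    using assms(3) e0 e1 e2 len by (auto simp: fusL_iff)
  have p1: "(\<Prod>i<l. Bc (x0!i) (x1!i) (x2!i) (replicate l I0 ! i) (x2 ! i) (x1 ! i)) =
     cis (pi * (sum_list (map hval x0) - sum_list (map hval x1) - sum_list (map hval x2)))"
    using len m by (intro prod_part) auto
  have p2: "(\<Prod>i<r. Bc (y0!i) (y1!i) (y2!i) (replicate r I0 ! i) (y2 ! i) (y1 ! i)) =
     cis (pi * (sum_list (map hval y0) - sum_list (map hval y1) - sum_list (map hval y2)))"
    using len m by (intro prod_part) auto
  have p2': "(\<Prod>i<r. cnj (Bc (y0!i) (y1!i) (y2!i) (replicate r I0 ! i) (y2 ! i) (y1 ! i))) =
     cis (- (pi * (sum_list (map hval y0) - sum_list (map hval y1) - sum_list (map hval y2))))"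
    using p2 by (metis cis_cnj cnj_prod)
  have "BL L2 L1 L0 L1 L2 (zero_idx l r) =
     cis (pi * (sum_list (map hval x0) - sum_list (map hval x1) - sum_list (map hval x2))) *
     cis (- (pi * (sum_list (map hval y0) - sum_list (map hval y1) - sum_list (map hval y2))))"
    unfolding BL_def zero_idx_def using e0 e1 e2 len p1 p2' by simp
  also have "\<dots> = mpow (sidx L0 - sidx L1 - sidx L2)"
    unfolding mpow_cis cis_mult sidx_def e0 e1 e2 by (simp add: algebra_simps)
  finally show ?thesis .
qed


lemma mpow_add: "mpow x * mpow y = mpow (x + y)"
  by (simp add: mpow_cis cis_mult algebra_simps)

lemma mpow_2int: "x \<in> \<int> \<Longrightarrow> mpow (x + x) = 1"
  unfolding mpow_cis by (metis cis_multiple_2pi mult.assoc mult_2 mult.commute)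

locale FAx =
  fixes l r :: nat and sc :: "complex \<Rightarrow> 'v::ab_group_add \<Rightarrow> 'v"
    and Sg :: "idx \<Rightarrow> 'v set" and mult :: "'v \<Rightarrow> 'v \<Rightarrow> 'v" and one :: 'v
  assumes fa: "framed_algebra l r sc Sg mult one"
begin

lemma vs: "vector_space sc" using fa by (simp add: framed_algebra_def)

sublocale vector_space sc by (rule vs)

definition decomp :: "'v \<Rightarrow> (idx \<Rightarrow> 'v) \<Rightarrow> bool" where
  "decomp v f \<longleftrightarrow> (\<forall>\<mu>\<in>ISlr l r. f \<mu> \<in> Sg \<mu>) \<and> (\<forall>\<mu>. \<mu> \<notin> ISlr l r \<longrightarrow> f \<mu> = 0) \<and>
             v = (\<Sum>\<mu>\<in>ISlr l r. f \<mu>)"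

lemma gd: "graded_direct_sum sc (ISlr l r) Sg" using fa by (simp add: framed_algebra_def)

lemma finI: "finite (ISlr l r)" using gd by (simp add: graded_direct_sum_def)

lemma sub: "L \<in> ISlr l r \<Longrightarrow> subspace (Sg L)" using gd by (simp add: graded_direct_sum_def)

lemma ex1: "\<exists>!f. decomp v f" using gd unfolding graded_direct_sum_def decomp_def by blast

lemma gcomp_alt: "gcomp (ISlr l r) Sg L v = (THE f. decomp v f) L"
  unfolding gcomp_def decomp_def ..

lemma gcomp_eq: "decomp v g \<Longrightarrow> gcomp (ISlr l r) Sg L v = g L"
  unfolding gcomp_alt using the1_equality[OF ex1] by metis

lemma gcomp_dec: "decomp v (\<lambda>L. gcomp (ISlr l r) Sg L v)"
  unfolding gcomp_alt using theI'[OF ex1[of v]] by simp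

lemma gcomp_mem: "L \<in> ISlr l r \<Longrightarrow> gcomp (ISlr l r) Sg L v \<in> Sg L"
  using gcomp_dec[of v] unfolding decomp_def by blast

lemma gcomp_id: "L \<in> ISlr l r \<Longrightarrow> v \<in> Sg L \<Longrightarrow> gcomp (ISlr l r) Sg L v = v"
proof -
  assume L: "L \<in> ISlr l r" and v: "v \<in> Sg L"
  have "decomp v (\<lambda>\<mu>. if \<mu> = L then v else 0)"
    unfolding decomp_def using L v sub subspace_0 finI by (auto simp: sum.delta)
  from gcomp_eq[OF this] show ?thesis by simp
qed

lemma gcomp_scale: "gcomp (ISlr l r) Sg L (sc c v) = sc c (gcomp (ISlr l r) Sg L v)"
proof -
  have d: "decomp v (\<lambda>L. gcomp (ISlr l r) Sg L v)" by (rule gcomp_dec)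
  have "decomp (sc c v) (\<lambda>L. sc c (gcomp (ISlr l r) Sg L v))"
  proof -
    have v: "v = (\<Sum>L\<in>ISlr l r. gcomp (ISlr l r) Sg L v)" using d unfolding decomp_def by blast
    have "sc c v = sc c (\<Sum>L\<in>ISlr l r. gcomp (ISlr l r) Sg L v)" using v by metis
    also have "\<dots> = (\<Sum>L\<in>ISlr l r. sc c (gcomp (ISlr l r) Sg L v))" by (simp add: scale_sum_right)
    finally show ?thesis
      using d unfolding decomp_def using sub subspace_scale by auto
  qed
  from gcomp_eq[OF this] show ?thesis .
qed

lemma lin: "Vector_Spaces.linear sc sc (mult a)" using fa by (simp add: framed_algebra_def)

lemma mult_scale: "mult a (sc c b) = sc c (mult a b)"
  using lin[of a] by (simp add: linear_iff_module_hom module_hom.scale)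

lemma dotL_scale: "dotL l r Sg mult L a (sc c b) = sc c (dotL l r Sg mult L a b)"
  by (simp add: dotL_def mult_scale gcomp_scale)

lemma dotL_zero: "dotL l r Sg mult L a 0 = 0"
  using dotL_scale[of L a 0 0] by simp

lemma dotL_mem: "L \<in> ISlr l r \<Longrightarrow> dotL l r Sg mult L a b \<in> Sg L"
  by (simp add: dotL_def gcomp_mem)

lemma nonint: "L \<in> ISlr l r \<Longrightarrow> sidx L \<notin> \<int> \<Longrightarrow> Sg L = {0}"
  using fa by (simp add: framed_algebra_def)

lemma dotL_nonint: "L \<in> ISlr l r \<Longrightarrow> sidx L \<notin> \<int> \<Longrightarrow> dotL l r Sg mult L a b = 0"
  using dotL_mem nonint by blast

lemma dotL_one: "L \<in> ISlr l r \<Longrightarrow> a \<in> Sg L \<Longrightarrow> dotL l r Sg mult L a one = a"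
  using fa by (simp add: dotL_def framed_algebra_def gcomp_id)

lemma FA4: "L0\<in>ISlr l r \<Longrightarrow> L1\<in>ISlr l r \<Longrightarrow> L2\<in>ISlr l r \<Longrightarrow> L3\<in>ISlr l r \<Longrightarrow>
      a1\<in>Sg L1 \<Longrightarrow> a2\<in>Sg L2 \<Longrightarrow> a3\<in>Sg L3 \<Longrightarrow> L'\<in>AL L0 L2 L1 L3 \<Longrightarrow>
        dotL l r Sg mult L0 a2 (dotL l r Sg mult L' a1 a3) =
        (\<Sum>L\<in>AL L0 L1 L2 L3.
           sc (BL L L' L0 L1 L2 L3) (dotL l r Sg mult L0 a1 (dotL l r Sg mult L a2 a3)))"
  using fa unfolding framed_algebra_def by blast

lemma one_mem: "one \<in> Sg (zero_idx l r)"
  using fa unfolding framed_algebra_def by blast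

lemma comm:
  assumes "L1 \<in> ISlr l r" "L2 \<in> ISlr l r" "a1 \<in> Sg L1" "a2 \<in> Sg L2" "L0 \<in> fusL L1 L2"
  shows "dotL l r Sg mult L0 a1 a2 = sc (mpow (sidx L0 + sidx L1 + sidx L2)) (dotL l r Sg mult L0 a2 a1)"
proof -
  have L0: "L0 \<in> ISlr l r" using assms fusL_ISlr by blast
  have "dotL l r Sg mult L0 a2 (dotL l r Sg mult L1 a1 one) =
        (\<Sum>L\<in>AL L0 L1 L2 (zero_idx l r).
           sc (BL L L1 L0 L1 L2 (zero_idx l r)) (dotL l r Sg mult L0 a1 (dotL l r Sg mult L a2 one)))"
    using assms L0 by (intro FA4 zero_ISlr one_mem AL_zero') auto
  also have "\<dots> = sc (mpow (sidx L0 - sidx L1 - sidx L2)) (dotL l r Sg mult L0 a1 a2)"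
    using assms by (simp add: AL_zero BL_zero dotL_one)
  finally have e: "dotL l r Sg mult L0 a2 a1 = sc (mpow (sidx L0 - sidx L1 - sidx L2)) (dotL l r Sg mult L0 a1 a2)"
    using assms by (simp add: dotL_one)
  show ?thesis
  proof (cases "sidx L0 \<in> \<int>")
    case True
    have "mpow (sidx L0 + sidx L1 + sidx L2) * mpow (sidx L0 - sidx L1 - sidx L2) = 1"
      unfolding mpow_add using mpow_2int[OF True] by (simp add: algebra_simps)
    then show ?thesis unfolding e by simp
  next
    case False
    then show ?thesis using L0 by (simp add: dotL_nonint)
  qed
qed


lemma assoc:
  assumes L: "L1 \<in> ISlr l r" "L2 \<in> ISlr l r" "L3 \<in> ISlr l r" "L0 \<in> ISlr l r"
    and a: "a1 \<in> Sg L1" "a2 \<in> Sg L2" "a3 \<in> Sg L3"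
    and mu': "\<mu>' \<in> AL L0 L1 L2 L3"
  shows "dotL l r Sg mult L0 a1 (dotL l r Sg mult \<mu>' a2 a3) =
            (\<Sum>\<mu>\<in>AL L0 L3 L1 L2.
               sc (mpow (sidx \<mu>' + sidx \<mu> + sidx L2 + sidx L0) * BL \<mu> \<mu>' L0 L3 L1 L2)
                  (dotL l r Sg mult L0 (dotL l r Sg mult \<mu> a1 a2) a3))"
proof (cases "sidx L3 \<in> \<int>")
  case False
  then have "a3 = 0" using nonint[OF L(3)] a(3) by blast
  then show ?thesis by (simp add: dotL_zero)
next
  case True
  have m1: "\<mu>' \<in> fusL L2 L3" "L0 \<in> fusL L1 \<mu>'" using mu' by (auto simp: AL_def)
  have mI: "\<mu>' \<in> ISlr l r" using m1 L fusL_ISlr by blast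
  have c1: "dotL l r Sg mult \<mu>' a2 a3 = sc (mpow (sidx \<mu>' + sidx L2 + sidx L3)) (dotL l r Sg mult \<mu>' a3 a2)"
    using comm L a m1 by blast
  have mu'': "\<mu>' \<in> AL L0 L1 L3 L2" using mu' by (auto simp: AL_def fusL_comm)
  have F: "dotL l r Sg mult L0 a1 (dotL l r Sg mult \<mu>' a3 a2) =
     (\<Sum>\<mu>\<in>AL L0 L3 L1 L2. sc (BL \<mu> \<mu>' L0 L3 L1 L2) (dotL l r Sg mult L0 a3 (dotL l r Sg mult \<mu> a1 a2)))"
    using FA4[OF L(4) L(3) L(1) L(2) a(3) a(1) a(2) mu''] .
  have c2: "dotL l r Sg mult L0 a3 (dotL l r Sg mult \<mu> a1 a2) =
      sc (mpow (sidx L0 + sidx L3 + sidx \<mu>)) (dotL l r Sg mult L0 (dotL l r Sg mult \<mu> a1 a2) a3)"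
    if "\<mu> \<in> AL L0 L3 L1 L2" for \<mu>
  proof -
    have "\<mu> \<in> fusL L1 L2" "L0 \<in> fusL L3 \<mu>" using that by (auto simp: AL_def)
    moreover have "\<mu> \<in> ISlr l r" using calculation L fusL_ISlr by blast
    ultimately show ?thesis using comm[of L3 \<mu> a3 "dotL l r Sg mult \<mu> a1 a2" L0] L a dotL_mem by blast
  qed
  have mm: "mpow (sidx \<mu>' + sidx L2 + sidx L3) * (B * mpow (sidx L0 + sidx L3 + sidx \<mu>)) =
      mpow (sidx \<mu>' + sidx \<mu> + sidx L2 + sidx L0) * B" for B \<mu>
  proof -
    have "mpow (sidx \<mu>' + sidx L2 + sidx L3) * (B * mpow (sidx L0 + sidx L3 + sidx \<mu>)) =
          (mpow (sidx \<mu>' + sidx L2 + sidx L3) * mpow (sidx L0 + sidx L3 + sidx \<mu>)) * B"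
      by (simp only: mult_ac)
    also have "\<dots> = mpow ((sidx \<mu>' + sidx L2 + sidx L3) + (sidx L0 + sidx L3 + sidx \<mu>)) * B"
      by (simp only: mpow_add)
    also have "(sidx \<mu>' + sidx L2 + sidx L3) + (sidx L0 + sidx L3 + sidx \<mu>) =
       (sidx \<mu>' + sidx \<mu> + sidx L2 + sidx L0) + (sidx L3 + sidx L3)" by simp
    also have "mpow ((sidx \<mu>' + sidx \<mu> + sidx L2 + sidx L0) + (sidx L3 + sidx L3)) =
       mpow (sidx \<mu>' + sidx \<mu> + sidx L2 + sidx L0) * mpow (sidx L3 + sidx L3)"
      by (simp only: mpow_add)
    also have "mpow (sidx L3 + sidx L3) = 1" by (rule mpow_2int[OF True])
    finally show ?thesis by (simp only: mult_1_right)
  qed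
  have "dotL l r Sg mult L0 a1 (dotL l r Sg mult \<mu>' a2 a3) =
     sc (mpow (sidx \<mu>' + sidx L2 + sidx L3))
       (\<Sum>\<mu>\<in>AL L0 L3 L1 L2. sc (BL \<mu> \<mu>' L0 L3 L1 L2) (dotL l r Sg mult L0 a3 (dotL l r Sg mult \<mu> a1 a2)))"
    by (simp add: c1 dotL_scale F)
  also have "\<dots> = (\<Sum>\<mu>\<in>AL L0 L3 L1 L2. sc (mpow (sidx \<mu>' + sidx L2 + sidx L3))
        (sc (BL \<mu> \<mu>' L0 L3 L1 L2) (sc (mpow (sidx L0 + sidx L3 + sidx \<mu>))
          (dotL l r Sg mult L0 (dotL l r Sg mult \<mu> a1 a2) a3))))"
    by (simp add: scale_sum_right c2)
  also have "\<dots> = (\<Sum>\<mu>\<in>AL L0 L3 L1 L2.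
               sc (mpow (sidx \<mu>' + sidx \<mu> + sidx L2 + sidx L0) * BL \<mu> \<mu>' L0 L3 L1 L2)
                  (dotL l r Sg mult L0 (dotL l r Sg mult \<mu> a1 a2) a3))"
    by (simp add: mm)
  finally show ?thesis .
qed

end

theorem mainTheorem2:
  fixes l r :: nat
    and sc :: "complex \<Rightarrow> 'v::ab_group_add \<Rightarrow> 'v"
    and Sg :: "idx \<Rightarrow> 'v set"
    and mult :: "'v \<Rightarrow> 'v \<Rightarrow> 'v"
    and one :: 'v
    and L1 L2 L3 :: idx
    and a1 a2 a3 :: 'v
  assumes "framed_algebra l r sc Sg mult one"
    and "L1 \<in> ISlr l r" "L2 \<in> ISlr l r" "L3 \<in> ISlr l r"
    and "a1 \<in> Sg L1" "a2 \<in> Sg L2" "a3 \<in> Sg L3"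
  shows "(\<forall>L0\<in>fusL L1 L2.
            dotL l r Sg mult L0 a1 a2 =
            sc (mpow (sidx L0 + sidx L1 + sidx L2)) (dotL l r Sg mult L0 a2 a1))
       \<and> (\<forall>L0\<in>ISlr l r. \<forall>\<mu>'\<in>AL L0 L1 L2 L3.
            dotL l r Sg mult L0 a1 (dotL l r Sg mult \<mu>' a2 a3) =
            (\<Sum>\<mu>\<in>AL L0 L3 L1 L2.
               sc (mpow (sidx \<mu>' + sidx \<mu> + sidx L2 + sidx L0) * BL \<mu> \<mu>' L0 L3 L1 L2)
                  (dotL l r Sg mult L0 (dotL l r Sg mult \<mu> a1 a2) a3)))"
proof -
  interpret FAx l r sc Sg mult one by (rule FAx.intro) (rule assms(1))
  show ?thesis
  proof (intro conjI ballI)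
    fix L0 assume "L0 \<in> fusL L1 L2"
    then show "dotL l r Sg mult L0 a1 a2 =
            sc (mpow (sidx L0 + sidx L1 + sidx L2)) (dotL l r Sg mult L0 a2 a1)"
      using comm assms by blast
  next
    fix L0 \<mu>' assume "L0 \<in> ISlr l r" "\<mu>' \<in> AL L0 L1 L2 L3"
    then show "dotL l r Sg mult L0 a1 (dotL l r Sg mult \<mu>' a2 a3) =
            (\<Sum>\<mu>\<in>AL L0 L3 L1 L2.
               sc (mpow (sidx \<mu>' + sidx \<mu> + sidx L2 + sidx L0) * BL \<mu> \<mu>' L0 L3 L1 L2)
                  (dotL l r Sg mult L0 (dotL l r Sg mult \<mu> a1 a2) a3))"
      using assoc assms by blast
  qed
qed

end
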